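(* Let $\bm{Z}\in\{0,1\}^n$, $\bm{X}\in\mathbb{R}^{n\times p}$, fix $\sigma^2>0$, let $\bm{S}$ be an $n\times n$ symmetric positive semidefinite matrix, and for $\rho^2\ge0$ let $\bm{\Sigma}=\bm{\Sigma}(\rho^2)=\sigma^2\bm{I}_n+\rho^2\bm{S}$. Assume that $\bm{X}^T\bm{\Sigma}^{-1}\bm{X}$ is invertible and $\bm{Z}^T\bm{\Sigma}^{-1}(\bm{I}_n-\bm{X}(\bm{X}^T\bm{\Sigma}^{-1}\bm{X})^{-1}\bm{X}^T\bm{\Sigma}^{-1})\bm{Z}\neq0$ for all $\rho^2\ge0$. Define $$\Delta(\rho^2)=\frac{\bm{Z}^T\bm{\Sigma}^{-1}(\bm{I}_n-\bm{X}(\bm{X}^T\bm{\Sigma}^{-1}\bm{X})^{-1}\bm{X}^T\bm{\Sigma}^{-1})\bm{S}(\bm{I}_n-\bm{\Sigma}^{-1}\bm{X}(\bm{X}^T\bm{\Sigma}^{-1}\bm{X})^{-1}\bm{X}^T)\bm{\Sigma}^{-1}\bm{Z}}{\big(\bm{Z}^T\bm{\Sigma}^{-1}(\bm{I}_n-\bm{X}(\bm{X}^T\bm{\Sigma}^{-1}\bm{X})^{-1}\bm{X}^T\bm{\Sigma}^{-1})\bm{Z}\big)^2}$$ and $$D(\rho^2)=\big(\bm{Z}^T\bm{\Sigma}^{-1}(\bm{I}_n-\bm{X}(\bm{X}^T\bm{\Sigma}^{-1}\bm{X})^{-1}\bm{X}^T\bm{\Sigma}^{-1})\bm{Z}\big)^{-1}.$$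 Then $\Delta(\rho^2)$ is non-increasing in $\rho^2$ and $D(\rho^2)$ is non-decreasing in $\rho^2$.
   Context: $\Delta(\rho^2)$ equals the weighted sum of squared mean imbalances $\sum_k\lambda_k(\sum_{Z_i=1}w_iv_{ki}-\sum_{Z_i=0}w_iv_{ki})^2$ of the eigenvectors of $\bm{S}$ under the GLS implied weights $\bm{w}$, and $D(\rho^2)=\sum_iw_i^2$ is the weight dispersion, where $\bm{w}=\bm{M}(\bm{I}_n-\bm{\Sigma}^{-1}\bm{X}(\bm{X}^T\bm{\Sigma}^{-1}\bm{X})^{-1}\bm{X}^T)\bm{\Sigma}^{-1}\bm{Z}/[\bm{Z}^T\bm{\Sigma}^{-1}(\bm{I}_n-\bm{X}(\bm{X}^T\bm{\Sigma}^{-1}\bm{X})^{-1}\bm{X}^T\bm{\Sigma}^{-1})\bm{Z}]$ with $M_{ii}=2Z_i-1$. *)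

theory Defs
  imports "HOL-Analysis.Analysis"
begin

definition Sig :: "real \<Rightarrow> real^'n^'n \<Rightarrow> real \<Rightarrow> real^'n^'n" where
  "Sig sigma2 S rho2 = sigma2 *\<^sub>R mat 1 + rho2 *\<^sub>R S"

definition XSX :: "real \<Rightarrow> real^'n^'n \<Rightarrow> real^'p^'n \<Rightarrow> real \<Rightarrow> real^'p^'p" where
  "XSX sigma2 S X rho2 = transpose X ** matrix_inv (Sig sigma2 S rho2) ** X"

definition Lmat :: "real \<Rightarrow> real^'n^'n \<Rightarrow> real^'p^'n \<Rightarrow> real \<Rightarrow> real^'n^'n" where
  "Lmat sigma2 S X rho2 = matrix_inv (Sig sigma2 S rho2) **
     (mat 1 - X ** matrix_inv (XSX sigma2 S X rho2) ** transpose X ** matrix_inv (Sig sigma2 S rho2))"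

definition Rmat :: "real \<Rightarrow> real^'n^'n \<Rightarrow> real^'p^'n \<Rightarrow> real \<Rightarrow> real^'n^'n" where
  "Rmat sigma2 S X rho2 = (mat 1 - matrix_inv (Sig sigma2 S rho2) ** X ** matrix_inv (XSX sigma2 S X rho2) ** transpose X)
     ** matrix_inv (Sig sigma2 S rho2)"

definition denomQ :: "real \<Rightarrow> real^'n^'n \<Rightarrow> real^'p^'n \<Rightarrow> real^'n \<Rightarrow> real \<Rightarrow> real" where
  "denomQ sigma2 S X Z rho2 = Z \<bullet> (Lmat sigma2 S X rho2 *v Z)"

definition Delta :: "real \<Rightarrow> real^'n^'n \<Rightarrow> real^'p^'n \<Rightarrow> real^'n \<Rightarrow> real \<Rightarrow> real" where
  "Delta sigma2 S X Z rho2 =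
     (Z \<bullet> ((Lmat sigma2 S X rho2 ** S ** Rmat sigma2 S X rho2) *v Z)) / (denomQ sigma2 S X Z rho2)\<^sup>2"

definition Dfun :: "real \<Rightarrow> real^'n^'n \<Rightarrow> real^'p^'n \<Rightarrow> real^'n \<Rightarrow> real \<Rightarrow> real" where
  "Dfun sigma2 S X Z rho2 = inverse (denomQ sigma2 S X Z rho2)"

end

theory Submission
  imports Defs
begin

lemma inv_props:
  fixes A :: "real^'n^'n"
  assumes "invertible A"
  shows "A ** matrix_inv A = mat 1" "matrix_inv A ** A = mat 1"
proof -
  have "\<exists>A'. A ** A' = mat 1 \<and> A' ** A = mat 1" using assms by (simp add: invertible_def)
  hence "A ** matrix_inv A = mat 1 \<and> matrix_inv A ** A = mat 1"
    unfolding matrix_inv_def by (rule someI_ex)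
  thus "A ** matrix_inv A = mat 1" "matrix_inv A ** A = mat 1" by auto
qed

lemma inner_transp:
  fixes M :: "real^'m^'n"
  shows "a \<bullet> (M *v b) = (transpose M *v a) \<bullet> b"
  by (simp add: dot_lmul_matrix)

declare transpose_matrix_vector[simp del] vector_transpose_matrix[simp del]

lemma Sig_mult:
  "Sig sigma2 S rho2 *v x = sigma2 *\<^sub>R x + rho2 *\<^sub>R (S *v x)"
  unfolding Sig_def
  by (simp add: matrix_vector_mult_add_rdistrib scaleR_matrix_vector_assoc[symmetric])

lemma core:
  fixes Z :: "real^'n" and X :: "real^'p^'n" and S :: "real^'n^'n" and sigma2 rho2 :: real
  assumes sigma_pos: "sigma2 > 0"
    and S_sym: "transpose S = S"
    and S_psd: "\<forall>x. x \<bullet> (S *v x) \<ge> 0"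
    and rho: "rho2 \<ge> 0"
    and invA: "invertible (XSX sigma2 S X rho2)"
    and nzQ: "denomQ sigma2 S X Z rho2 \<noteq> 0"
  obtains y where "Z \<bullet> y = 1" "transpose X *v y = 0"
    "Dfun sigma2 S X Z rho2 = sigma2 * (y \<bullet> y) + rho2 * (y \<bullet> (S *v y))"
    "Delta sigma2 S X Z rho2 = y \<bullet> (S *v y)"
    "\<And>y'. Z \<bullet> y' = 1 \<Longrightarrow> transpose X *v y' = 0 \<Longrightarrow>
        sigma2 * (y \<bullet> y) + rho2 * (y \<bullet> (S *v y)) \<le> sigma2 * (y' \<bullet> y') + rho2 * (y' \<bullet> (S *v y'))"
proof -
  define Sg where "Sg = Sig sigma2 S rho2"
  define Si where "Si = matrix_inv Sg"
  define A where "A = XSX sigma2 S X rho2"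
  define Ai where "Ai = matrix_inv A"
  have Sgv: "Sg *v x = sigma2 *\<^sub>R x + rho2 *\<^sub>R (S *v x)" for x
    unfolding Sg_def by (rule Sig_mult)
  have Ssym: "a \<bullet> (S *v b) = (S *v a) \<bullet> b" for a b
    using inner_transp[of a S b] S_sym by simp
  have quad: "x \<bullet> (Sg *v x) = sigma2 * (x \<bullet> x) + rho2 * (x \<bullet> (S *v x))" for x
    by (simp add: Sgv inner_add_right)
  have sym: "a \<bullet> (Sg *v b) = (Sg *v a) \<bullet> b" for a b
    using Ssym[of a b] by (simp add: Sgv inner_add_right inner_add_left inner_commute[of _ a])
  have quadpos: "x \<bullet> (Sg *v x) \<ge> 0" for x
    using quad[of x] S_psd sigma_pos rho by (simp add: mult_nonneg_nonneg)
  have invSg: "invertible Sg"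
  proof -
    have "x = 0" if "Sg *v x = 0" for x
    proof -
      have "sigma2 * (x \<bullet> x) + rho2 * (x \<bullet> (S *v x)) = 0" using quad[of x] that by simp
      moreover have "rho2 * (x \<bullet> (S *v x)) \<ge> 0" using S_psd rho by simp
      moreover have "x \<bullet> x \<ge> 0" by simp
      ultimately have "sigma2 * (x \<bullet> x) = 0" using sigma_pos
        by (smt (verit) mult_nonneg_nonneg)
      thus ?thesis using sigma_pos by simp
    qed
    thus ?thesis using matrix_left_invertible_ker invertible_left_inverse by blast
  qed
  have SgSi: "Sg *v (Si *v v) = v" for v
    using inv_props(1)[OF invSg] by (simp add: Si_def matrix_vector_mul_assoc)
  have AAi: "A *v (Ai *v v) = v" for v
    using inv_props(1)[OF invA] by (simp add: A_def Ai_def matrix_vector_mul_assoc)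
  have Aeq: "transpose X *v (Si *v (X *v v)) = A *v v" for v
    by (simp add: A_def XSX_def Si_def Sg_def matrix_vector_mul_assoc matrix_mul_assoc)
  define w where "w v = Ai *v (transpose X *v (Si *v v))" for v
  have Lv: "Lmat sigma2 S X rho2 *v v = Si *v v - Si *v (X *v w v)" for v
    unfolding Lmat_def w_def Si_def Sg_def Ai_def A_def
    by (simp add: matrix_vector_mult_diff_rdistrib matrix_vector_mult_diff_distrib
        matrix_vector_mul_assoc[symmetric])
  have Rv: "Rmat sigma2 S X rho2 *v v = Si *v v - Si *v (X *v w v)" for v
    unfolding Rmat_def w_def Si_def Sg_def Ai_def A_def
    by (simp add: matrix_vector_mult_diff_rdistrib matrix_vector_mult_diff_distrib
        matrix_vector_mul_assoc[symmetric])
  have F1: "transpose X *v (Lmat sigma2 S X rho2 *v v) = 0" for v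
    by (simp add: Lv matrix_vector_mult_diff_distrib Aeq AAi w_def)
  have F2: "Sg *v (Lmat sigma2 S X rho2 *v v) = v - X *v w v" for v
    by (simp add: Lv matrix_vector_mult_diff_distrib SgSi)
  define u where "u = Lmat sigma2 S X rho2 *v Z"
  have Xu: "transpose X *v u = 0" using F1 by (simp add: u_def)
  have Zdecomp: "Z = Sg *v u + X *v w Z" using F2[of Z] by (simp add: u_def)
  have ZL: "Z \<bullet> (Lmat sigma2 S X rho2 *v v) = u \<bullet> v" for v
  proof -
    have "Z \<bullet> (Lmat sigma2 S X rho2 *v v)
        = (Sg *v u) \<bullet> (Lmat sigma2 S X rho2 *v v) + (X *v w Z) \<bullet> (Lmat sigma2 S X rho2 *v v)"
      by (subst Zdecomp) (simp add: inner_add_left)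
    also have "(Sg *v u) \<bullet> (Lmat sigma2 S X rho2 *v v) = u \<bullet> (v - X *v w v)"
      using sym[of u "Lmat sigma2 S X rho2 *v v"] F2[of v] by simp
    also have "(X *v w Z) \<bullet> (Lmat sigma2 S X rho2 *v v) = 0"
      using inner_transp[of "Lmat sigma2 S X rho2 *v v" X "w Z"] F1[of v]
      by (simp add: inner_commute)
    also have "u \<bullet> (v - X *v w v) = u \<bullet> v"
      using inner_transp[of u X "w v"] Xu by (simp add: inner_diff_right)
    finally show ?thesis by simp
  qed
  define Q where "Q = denomQ sigma2 S X Z rho2"
  have Qu: "Q = u \<bullet> Z" using ZL[of Z] by (simp add: Q_def denomQ_def)
  have Qnz: "Q \<noteq> 0" using nzQ by (simp add: Q_def)
  have num: "Z \<bullet> ((Lmat sigma2 S X rho2 ** S ** Rmat sigma2 S X rho2) *v Z) = u \<bullet> (S *v u)"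
  proof -
    have "Rmat sigma2 S X rho2 *v Z = u" by (simp add: Rv Lv u_def)
    thus ?thesis using ZL[of "S *v u"] by (simp add: matrix_vector_mul_assoc[symmetric])
  qed
  have Sgu: "Sg *v u = Z - X *v w Z" using F2[of Z] by (simp add: u_def)
  have uSu: "u \<bullet> (Sg *v u) = Q"
    using inner_transp[of u X "w Z"] Xu by (simp add: Sgu inner_diff_right Qu inner_commute)
  define y where "y = (1 / Q) *\<^sub>R u"
  have y1: "Z \<bullet> y = 1" using Qnz by (simp add: y_def Qu inner_commute)
  have y2: "transpose X *v y = 0" by (simp add: y_def matrix_vector_mult_scaleR Xu)
  have y3: "Dfun sigma2 S X Z rho2 = sigma2 * (y \<bullet> y) + rho2 * (y \<bullet> (S *v y))"
  proof -
    have "y \<bullet> (Sg *v y) = (1/Q)^2 * (u \<bullet> (Sg *v u))"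
      by (simp add: y_def matrix_vector_mult_scaleR power2_eq_square)
    also have "\<dots> = inverse Q" using Qnz by (simp add: uSu power2_eq_square field_simps)
    finally show ?thesis using quad[of y] by (simp add: Dfun_def Q_def)
  qed
  have y4: "Delta sigma2 S X Z rho2 = y \<bullet> (S *v y)"
    by (simp add: Delta_def num Q_def[symmetric] y_def matrix_vector_mult_scaleR
        power2_eq_square field_simps)
  have y5: "sigma2 * (y \<bullet> y) + rho2 * (y \<bullet> (S *v y)) \<le> sigma2 * (y' \<bullet> y') + rho2 * (y' \<bullet> (S *v y'))"
    if h1: "Z \<bullet> y' = 1" and h2: "transpose X *v y' = 0" for y'
  proof -
    define e where "e = y' - y"
    have eZ: "Z \<bullet> e = 0" using h1 y1 by (simp add: e_def inner_diff_right)
    have eX: "transpose X *v e = 0" using h2 y2 by (simp add: e_def matrix_vector_mult_diff_distrib)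
    have Sgy: "Sg *v y = (1/Q) *\<^sub>R (Z - X *v w Z)" by (simp add: y_def matrix_vector_mult_scaleR Sgu)
    have cross: "e \<bullet> (Sg *v y) = 0"
      using inner_transp[of e X "w Z"] eX eZ by (simp add: Sgy inner_diff_right inner_commute)
    have cross2: "y \<bullet> (Sg *v e) = 0" using sym[of y e] cross by (simp add: inner_commute)
    have "y' \<bullet> (Sg *v y') = y \<bullet> (Sg *v y) + e \<bullet> (Sg *v y) + y \<bullet> (Sg *v e) + e \<bullet> (Sg *v e)"
      by (simp add: e_def matrix_vector_mult_diff_distrib inner_diff_left inner_diff_right algebra_simps)
    hence "y \<bullet> (Sg *v y) \<le> y' \<bullet> (Sg *v y')" using cross cross2 quadpos[of e] by simp
    thus ?thesis using quad[of y] quad[of y'] by simp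
  qed
  show ?thesis using that y1 y2 y3 y4 y5 by blast
qed

theorem proposition4:
  fixes Z :: "real^'n" and X :: "real^'p^'n" and S :: "real^'n^'n" and sigma2 :: real
  assumes Zbin: "\<forall>i. Z $ i \<in> {0, 1}"
    and sigma_pos: "sigma2 > 0"
    and S_sym: "transpose S = S"
    and S_psd: "\<forall>x. x \<bullet> (S *v x) \<ge> 0"
    and inv: "\<forall>rho2\<ge>0. invertible (XSX sigma2 S X rho2)"
    and nz: "\<forall>rho2\<ge>0. denomQ sigma2 S X Z rho2 \<noteq> 0"
  shows "\<forall>r1 r2. 0 \<le> r1 \<and> r1 \<le> r2 \<longrightarrow>
           Delta sigma2 S X Z r2 \<le> Delta sigma2 S X Z r1 \<and>
           Dfun sigma2 S X Z r1 \<le> Dfun sigma2 S X Z r2"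
proof (intro allI impI)
  fix r1 r2 :: real
  assume r: "0 \<le> r1 \<and> r1 \<le> r2"
  have r2: "0 \<le> r2" using r by linarith
  obtain y1 where a1: "Z \<bullet> y1 = 1" "transpose X *v y1 = 0"
    "Dfun sigma2 S X Z r1 = sigma2 * (y1 \<bullet> y1) + r1 * (y1 \<bullet> (S *v y1))"
    "Delta sigma2 S X Z r1 = y1 \<bullet> (S *v y1)"
    "\<And>y'. Z \<bullet> y' = 1 \<Longrightarrow> transpose X *v y' = 0 \<Longrightarrow>
        sigma2 * (y1 \<bullet> y1) + r1 * (y1 \<bullet> (S *v y1)) \<le> sigma2 * (y' \<bullet> y') + r1 * (y' \<bullet> (S *v y'))"
    using core[OF sigma_pos S_sym S_psd, of r1 X Z] r inv nz by blast
  obtain y2 where a2: "Z \<bullet> y2 = 1" "transpose X *v y2 = 0"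
    "Dfun sigma2 S X Z r2 = sigma2 * (y2 \<bullet> y2) + r2 * (y2 \<bullet> (S *v y2))"
    "Delta sigma2 S X Z r2 = y2 \<bullet> (S *v y2)"
    "\<And>y'. Z \<bullet> y' = 1 \<Longrightarrow> transpose X *v y' = 0 \<Longrightarrow>
        sigma2 * (y2 \<bullet> y2) + r2 * (y2 \<bullet> (S *v y2)) \<le> sigma2 * (y' \<bullet> y') + r2 * (y' \<bullet> (S *v y'))"
    using core[OF sigma_pos S_sym S_psd, of r2 X Z] r2 inv nz by blast
  define s1 where "s1 = y1 \<bullet> (S *v y1)"
  define s2 where "s2 = y2 \<bullet> (S *v y2)"
  have i1: "sigma2 * (y1 \<bullet> y1) + r1 * s1 \<le> sigma2 * (y2 \<bullet> y2) + r1 * s2"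
    using a1(5)[OF a2(1,2)] by (simp add: s1_def s2_def)
  have i2: "sigma2 * (y2 \<bullet> y2) + r2 * s2 \<le> sigma2 * (y1 \<bullet> y1) + r2 * s1"
    using a2(5)[OF a1(1,2)] by (simp add: s1_def s2_def)
  have s2pos: "s2 \<ge> 0" using S_psd by (simp add: s2_def)
  have "(r2 - r1) * (s1 - s2) \<ge> 0" using i1 i2 by (simp add: algebra_simps)
  hence D: "s2 \<le> s1"
  proof (cases "r1 = r2")
    case True
    then show ?thesis using a1(4) a2(4) by (simp add: s1_def s2_def)
  next
    case False
    hence "r2 - r1 > 0" using r by simp
    then show ?thesis using \<open>(r2 - r1) * (s1 - s2) \<ge> 0\<close>
      by (simp add: zero_le_mult_iff)
  qed
  have "r1 * s2 \<le> r2 * s2" using r s2pos by (simp add: mult_right_mono)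
  hence "Dfun sigma2 S X Z r1 \<le> Dfun sigma2 S X Z r2"
    using a1(3) a2(3) i1 by (simp add: s1_def s2_def)
  thus "Delta sigma2 S X Z r2 \<le> Delta sigma2 S X Z r1 \<and>
        Dfun sigma2 S X Z r1 \<le> Dfun sigma2 S X Z r2"
    using D a1(4) a2(4) by (simp add: s1_def s2_def)
qed

end
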